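(* Let $C$ be a self-adjoint positive operator on a separable complex Hilbert space $\mathfrak{h}$ and let $L\in\mathfrak{L}((\mathcal{D}(C),\|\cdot\|_C),\mathfrak{h})$. Then $L\circ\pi_C:(\mathfrak{h},\mathcal{B}(\mathfrak{h}))\to(\mathfrak{h},\mathcal{B}(\mathfrak{h}))$ is measurable.
   Context: $\|x\|_C^2=\|x\|^2+\|Cx\|^2$; $\mathfrak{L}(\mathfrak{X},\mathfrak{Z})$ denotes bounded linear operators; $\pi_C(x)=x$ if $x\in\mathcal{D}(C)$ and $\pi_C(x)=0$ otherwise; $\mathcal{B}(\mathfrak{h})$ is the Borel $\sigma$-algebra. *)

theory Defs
  imports "HOL-Analysis.Analysis"
begin

text \<open>A complex Hilbert space, encoded as a real Hilbert space (complete real inner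
product space) carrying an orthogonal complex structure J (multiplication by i).
Complex scalar multiplication and the complex inner product (conjugate-linear in
the first argument, linear in the second) are derived from it; the norm, topology
and Borel sets are those of the underlying real Hilbert space.\<close>

class complex_hilbert = real_inner + complete_space +
  fixes cJ :: "'a \<Rightarrow> 'a"
  assumes cJ_add: "cJ (x + y) = cJ x + cJ y"
    and cJ_scaleR: "cJ (r *\<^sub>R x) = r *\<^sub>R cJ x"
    and cJ_cJ: "cJ (cJ x) = - x"
    and cJ_inner: "inner (cJ x) (cJ y) = inner x y"

definition cscale :: "complex \<Rightarrow> 'a::complex_hilbert \<Rightarrow> 'a" where
  "cscale z x = Re z *\<^sub>R x + Im z *\<^sub>R cJ x"

definition cinner :: "'a::complex_hilbert \<Rightarrow> 'a \<Rightarrow> complex" where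
  "cinner x y = Complex (inner x y) (inner x (cJ y))"

definition densely_defined_op :: "'a::complex_hilbert set \<Rightarrow> ('a \<Rightarrow> 'a) \<Rightarrow> bool" where
  "densely_defined_op D C \<longleftrightarrow>
     0 \<in> D \<and> (\<forall>x\<in>D. \<forall>y\<in>D. x + y \<in> D) \<and> (\<forall>z x. x \<in> D \<longrightarrow> cscale z x \<in> D) \<and>
     (\<forall>x\<in>D. \<forall>y\<in>D. C (x + y) = C x + C y) \<and>
     (\<forall>z. \<forall>x\<in>D. C (cscale z x) = cscale z (C x)) \<and>
     closure D = UNIV"

text \<open>Self-adjoint: D(C*) = D(C) and C* = C, where
 D(C*) = {y. \<exists>w. \<forall>x\<in>D(C). <Cx,y> = <x,w>} and C* y = w.\<close>
definition self_adjoint_op :: "'a::complex_hilbert set \<Rightarrow> ('a \<Rightarrow> 'a) \<Rightarrow> bool" where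
  "self_adjoint_op D C \<longleftrightarrow> densely_defined_op D C \<and>
     (\<forall>y. y \<in> D \<longleftrightarrow> (\<exists>w. \<forall>x\<in>D. cinner (C x) y = cinner x w)) \<and>
     (\<forall>x\<in>D. \<forall>y\<in>D. cinner (C x) y = cinner x (C y))"

definition positive_op :: "'a::complex_hilbert set \<Rightarrow> ('a \<Rightarrow> 'a) \<Rightarrow> bool" where
  "positive_op D C \<longleftrightarrow> (\<forall>x\<in>D. 0 \<le> Re (cinner x (C x)))"

definition graph_norm :: "('a::complex_hilbert \<Rightarrow> 'a) \<Rightarrow> 'a \<Rightarrow> real" where
  "graph_norm C x = sqrt ((norm x)\<^sup>2 + (norm (C x))\<^sup>2)"

text \<open>L is a bounded complex-linear map (D(C), ||.||_C) \<rightarrow> h (values of L off D are irrelevant).\<close>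
definition bounded_op_from_graph ::
  "'a::complex_hilbert set \<Rightarrow> ('a \<Rightarrow> 'a) \<Rightarrow> ('a \<Rightarrow> 'a) \<Rightarrow> bool" where
  "bounded_op_from_graph D C L \<longleftrightarrow>
     (\<forall>x\<in>D. \<forall>y\<in>D. L (x + y) = L x + L y) \<and>
     (\<forall>z. \<forall>x\<in>D. L (cscale z x) = cscale z (L x)) \<and>
     (\<exists>K. \<forall>x\<in>D. norm (L x) \<le> K * graph_norm C x)"

definition pi_C :: "'a set \<Rightarrow> 'a::zero \<Rightarrow> 'a" where
  "pi_C D x = (if x \<in> D then x else 0)"

end

theory Submission
  imports Defs
begin

lemma cJ_zero[simp]: "cJ (0::'a::complex_hilbert) = 0"
  by (metis cJ_scaleR scale_zero_left)
lemma cJ_minus: "cJ (- (x::'a::complex_hilbert)) = - cJ x"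
  by (metis cJ_scaleR scaleR_minus1_left)
lemma cJ_diff: "cJ ((x::'a::complex_hilbert) - y) = cJ x - cJ y"
  using cJ_add[of x "-y"] cJ_minus[of y] by simp
lemma norm_cJ[simp]: "norm (cJ (x::'a::complex_hilbert)) = norm x"
  using cJ_inner[of x x] by (simp add: norm_eq_sqrt_inner)
lemma inner_cJ_left: "inner (cJ (x::'a::complex_hilbert)) y = - inner x (cJ y)"
  using cJ_inner[of "cJ x" y] by (simp add: cJ_cJ)
lemma bounded_linear_cJ: "bounded_linear (cJ :: 'a::complex_hilbert \<Rightarrow> 'a)"
  by (rule bounded_linear_intro[where K=1]) (auto simp: cJ_add cJ_scaleR)
lemma tendsto_cJ: "(f \<longlongrightarrow> (a::'a::complex_hilbert)) F \<Longrightarrow> ((\<lambda>k. cJ (f k)) \<longlongrightarrow> cJ a) F"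
  by (rule bounded_linear.tendsto[OF bounded_linear_cJ])

lemma cscale_real: "cscale (complex_of_real r) x = r *\<^sub>R x"
  by (simp add: cscale_def)
lemma cscale_ii: "cscale \<i> x = cJ x"
  by (simp add: cscale_def)
lemma cinner_eq_iff: "cinner a b = cinner c d \<longleftrightarrow> inner a b = inner c d \<and> inner a (cJ b) = inner c (cJ d)"
  by (simp add: cinner_def complex_eq_iff)
lemma Re_cinner: "Re (cinner a b) = inner a b"
  by (simp add: cinner_def)

lemma projection_exists:
  fixes V :: "'a::{real_inner,complete_space} set"
  assumes cl: "closed V" and z: "0 \<in> V" and add: "\<And>a b. a \<in> V \<Longrightarrow> b \<in> V \<Longrightarrow> a + b \<in> V"
    and sc: "\<And>r a. a \<in> V \<Longrightarrow> r *\<^sub>R a \<in> V"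
  shows "\<exists>p\<in>V. \<forall>v\<in>V. inner (y - p) v = 0"
proof -
  define A where "A = (\<lambda>v. (norm (y - v))\<^sup>2) ` V"
  define d where "d = Inf A"
  have bdd: "bdd_below A" unfolding A_def by (rule bdd_belowI[where m=0]) auto
  have ne: "A \<noteq> {}" using z unfolding A_def by auto
  have dle: "d \<le> (norm (y - v))\<^sup>2" if "v \<in> V" for v
    unfolding d_def A_def using bdd that by (auto intro!: cInf_lower simp: A_def)
  have "\<exists>v\<in>V. (norm (y - v))\<^sup>2 < d + 1 / real (Suc k)" for k
  proof -
    have "\<exists>a\<in>A. a < d + 1 / real (Suc k)"
      using cInf_lessD[OF ne, of "d + 1 / real (Suc k)"] unfolding d_def by simp
    then show ?thesis unfolding A_def by auto
  qed
  then obtain v where vV: "\<And>k. v k \<in> V" and vlt: "\<And>k. (norm (y - v k))\<^sup>2 < d + 1 / real (Suc k)"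
    by metis
  have par: "(norm (v k - v j))\<^sup>2 \<le> 2 / real (Suc k) + 2 / real (Suc j)" for k j
  proof -
    have mid: "(1/2) *\<^sub>R (v k + v j) \<in> V" using vV add sc by blast
    have "d \<le> (norm (y - (1/2) *\<^sub>R (v k + v j)))\<^sup>2" using dle[OF mid] .
    moreover have "(norm (v k - v j))\<^sup>2 = 2 * (norm (y - v k))\<^sup>2 + 2 * (norm (y - v j))\<^sup>2 - 4 * (norm (y - (1/2) *\<^sub>R (v k + v j)))\<^sup>2"
      by (simp add: power2_norm_eq_inner inner_diff_left inner_diff_right inner_add_left inner_add_right inner_commute algebra_simps)
    ultimately show ?thesis using vlt[of k] vlt[of j] by linarith
  qed
  have "Cauchy v"
  proof (rule CauchyI)
    fix e :: real assume e: "e > 0"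
    obtain M :: nat where M: "4 / (e\<^sup>2) < real M" using reals_Archimedean2 by blast
    show "\<exists>M. \<forall>m\<ge>M. \<forall>n\<ge>M. norm (v m - v n) < e"
    proof (intro exI allI impI)
      fix m n assume mM: "M \<le> m" and nM: "M \<le> n"
      have e2: "e\<^sup>2 > 0" using e by simp
      have "2 / real (Suc m) \<le> 2 / real (Suc M)" using mM by (simp add: frac_le)
      moreover have "2 / real (Suc n) \<le> 2 / real (Suc M)" using nM by (simp add: frac_le)
      moreover have "4 / real (Suc M) < e\<^sup>2"
      proof -
        have "4 < e\<^sup>2 * real M" using M e2 by (simp add: field_simps)
        also have "\<dots> \<le> e\<^sup>2 * real (Suc M)" using e2 by simp
        finally show ?thesis by (simp add: field_simps)
      qed
      ultimately have "(norm (v m - v n))\<^sup>2 < e\<^sup>2" using par[of m n] by linarith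
      then show "norm (v m - v n) < e" using e by (meson abs_le_square_iff abs_norm_cancel less_le_not_le linorder_not_less power2_less_imp_less)
    qed
  qed
  then obtain p where vp: "v \<longlonglongrightarrow> p" using Cauchy_convergent_iff convergent_def by blast
  have pV: "p \<in> V" using closed_sequentially[OF cl] vV vp by blast
  have "(\<lambda>k. (norm (y - v k))\<^sup>2) \<longlonglongrightarrow> (norm (y - p))\<^sup>2"
    by (intro tendsto_intros vp)
  moreover have "(\<lambda>k. d + 1 / real (Suc k)) \<longlonglongrightarrow> d + 0"
    by (intro tendsto_intros LIMSEQ_Suc[OF lim_inverse_n'])
  ultimately have h0: "(norm (y - p))\<^sup>2 \<le> d + 0"
    using vlt by (intro LIMSEQ_le) (auto intro: less_imp_le)
  then have pmin: "(norm (y - p))\<^sup>2 \<le> (norm (y - w))\<^sup>2" if "w \<in> V" for w using order_trans[OF _ dle[OF that], of "(norm (y - p))\<^sup>2"] h0 by linarith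
  show ?thesis
  proof (intro bexI[OF _ pV] ballI)
    fix u assume uV: "u \<in> V"
    define a where "a = inner (y - p) u"
    define b where "b = (norm u)\<^sup>2"
    have b0: "b \<ge> 0" unfolding b_def by simp
    have ineq: "2 * s * a \<le> s\<^sup>2 * b" for s
    proof -
      have "p + s *\<^sub>R u \<in> V" using add sc pV uV by blast
      from pmin[OF this] have "(norm (y - p))\<^sup>2 \<le> (norm ((y - p) - s *\<^sub>R u))\<^sup>2" by (simp add: algebra_simps)
      also have "\<dots> = (norm (y - p))\<^sup>2 - 2 * s * a + s\<^sup>2 * b"
        unfolding a_def b_def by (simp only: power2_norm_eq_inner) (simp add: inner_diff_left inner_diff_right inner_commute power2_eq_square algebra_simps)
      finally show ?thesis by simp
    qed
    show "inner (y - p) u = 0"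
    proof (rule ccontr)
      assume "inner (y - p) u \<noteq> 0"
      then have a0: "a\<^sup>2 > 0" unfolding a_def by simp
      have b1: "b + 1 > 0" using b0 by simp
      have sa: "(a/(b+1))*a > 0" using a0 b1 by (simp add: power2_eq_square)
      have e: "(a/(b+1))\<^sup>2*b = ((a/(b+1))*a) * (b/(b+1))" using b1 by (simp add: power2_eq_square field_simps)
      have "b/(b+1) \<le> 1" using b1 by simp
      then have "((a/(b+1))*a) * (b/(b+1)) \<le> ((a/(b+1))*a) * 1" using sa by (intro mult_left_mono) auto
      then show False using ineq[of "a/(b+1)"] e sa by linarith
    qed
  qed
qed

lemma lipschitz_cont:
  fixes f :: "'a::real_normed_vector \<Rightarrow> 'b::real_normed_vector"
  assumes "\<And>a b. norm (f a - f b) \<le> M * norm (a - b)"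
  shows "continuous_on UNIV f"
  unfolding continuous_on_iff
proof (intro ballI allI impI)
  fix x and e :: real assume e: "e > 0"
  show "\<exists>d>0. \<forall>x'\<in>UNIV. dist x' x < d \<longrightarrow> dist (f x') (f x) < e"
  proof (intro exI[of _ "e / (\<bar>M\<bar> + 1)"] conjI ballI impI)
    show "e / (\<bar>M\<bar> + 1) > 0" using e by simp
    fix x' assume "dist x' x < e / (\<bar>M\<bar> + 1)"
    moreover have "\<bar>M\<bar> + 1 > 0" by simp
    ultimately have h: "norm (x' - x) * (\<bar>M\<bar> + 1) < e" by (simp add: dist_norm pos_less_divide_eq)
    have "norm (f x' - f x) \<le> M * norm (x' - x)" using assms .
    also have "\<dots> \<le> (\<bar>M\<bar> + 1) * norm (x' - x)" by (intro mult_right_mono) auto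
    also have "\<dots> = norm (x' - x) * (\<bar>M\<bar> + 1)" by simp
    finally show "dist (f x') (f x) < e" using h by (simp add: dist_norm)
  qed
qed

locale sop =
  fixes D :: "'a::complex_hilbert set" and C :: "'a \<Rightarrow> 'a"
  assumes sa: "self_adjoint_op D C" and pos: "positive_op D C"
begin

lemma dd: "densely_defined_op D C" using sa unfolding self_adjoint_op_def by blast
lemma D0: "0 \<in> D" using dd unfolding densely_defined_op_def by blast
lemma Dadd: "x \<in> D \<Longrightarrow> y \<in> D \<Longrightarrow> x + y \<in> D" using dd unfolding densely_defined_op_def by blast
lemma Dcs: "x \<in> D \<Longrightarrow> cscale z x \<in> D" using dd unfolding densely_defined_op_def by blast
lemma DscaleR: "x \<in> D \<Longrightarrow> r *\<^sub>R x \<in> D" using Dcs[of x "complex_of_real r"] by (simp add: cscale_real)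
lemma DcJ: "x \<in> D \<Longrightarrow> cJ x \<in> D" using Dcs[of x "\<i>"] by (simp add: cscale_ii)
lemma Dminus: "x \<in> D \<Longrightarrow> - x \<in> D" using DscaleR[of x "-1"] by simp
lemma Ddiff: "x \<in> D \<Longrightarrow> y \<in> D \<Longrightarrow> x - y \<in> D" using Dadd[of x "-y"] Dminus[of y] by simp
lemma Cadd: "x \<in> D \<Longrightarrow> y \<in> D \<Longrightarrow> C (x + y) = C x + C y" using dd unfolding densely_defined_op_def by blast
lemma Ccs: "x \<in> D \<Longrightarrow> C (cscale z x) = cscale z (C x)" using dd unfolding densely_defined_op_def by blast
lemma CscaleR: "x \<in> D \<Longrightarrow> C (r *\<^sub>R x) = r *\<^sub>R C x" using Ccs[of x "complex_of_real r"] by (simp add: cscale_real)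
lemma CcJ: "x \<in> D \<Longrightarrow> C (cJ x) = cJ (C x)" using Ccs[of x "\<i>"] by (simp add: cscale_ii)
lemma Cminus: "x \<in> D \<Longrightarrow> C (- x) = - C x" using CscaleR[of x "-1"] by simp
lemma Cdiff: "x \<in> D \<Longrightarrow> y \<in> D \<Longrightarrow> C (x - y) = C x - C y" using Cadd[of x "-y"] Cminus[of y] Dminus[of y] by simp
lemma dense: "closure D = UNIV" using dd unfolding densely_defined_op_def by blast
lemma Csym: "x \<in> D \<Longrightarrow> y \<in> D \<Longrightarrow> cinner (C x) y = cinner x (C y)" using sa unfolding self_adjoint_op_def by blast
lemma charD: "y \<in> D \<longleftrightarrow> (\<exists>w. \<forall>x\<in>D. cinner (C x) y = cinner x w)" using sa unfolding self_adjoint_op_def by blast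
lemma Cpos: "x \<in> D \<Longrightarrow> 0 \<le> inner x (C x)" using pos by (simp add: positive_op_def Re_cinner)

lemma dense_zero: assumes "\<And>z. z \<in> D \<Longrightarrow> inner z v = 0" shows "v = 0"
proof -
  have "v \<in> closure D" unfolding dense by (rule UNIV_I)
  then have "\<exists>z. (\<forall>k. z k \<in> D) \<and> z \<longlonglongrightarrow> v" by (simp only: closure_sequential)
  then obtain z where zD: "\<And>k. z k \<in> D" and zv: "z \<longlonglongrightarrow> v" by blast
  have "(\<lambda>k. inner (z k) v) \<longlonglongrightarrow> inner v v" by (rule tendsto_inner[OF zv tendsto_const])
  moreover have "(\<lambda>k. inner (z k) v) = (\<lambda>k. 0)" by (rule ext) (simp add: assms zD)
  ultimately have "(\<lambda>k. 0::real) \<longlonglongrightarrow> inner v v" by simp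
  then have "0 = inner v v" by (rule LIMSEQ_unique[OF tendsto_const])
  then show ?thesis by simp
qed

lemma closedC:
  assumes xD: "\<And>k. x k \<in> D" and xa: "x \<longlonglongrightarrow> a" and Cx: "(\<lambda>k. C (x k)) \<longlonglongrightarrow> b"
  shows "a \<in> D \<and> C a = b"
proof -
  have eq: "cinner (C z) a = cinner z b" if zD: "z \<in> D" for z
  proof -
    have e1: "inner (C z) (x k) = inner z (C (x k))" and e2: "inner (C z) (cJ (x k)) = inner z (cJ (C (x k)))" for k
      using Csym[OF zD xD[of k]] by (simp_all add: cinner_eq_iff)
    have l1: "(\<lambda>k. inner (C z) (x k)) \<longlonglongrightarrow> inner (C z) a" by (intro tendsto_intros xa)
    have l2: "(\<lambda>k. inner (C z) (x k)) \<longlonglongrightarrow> inner z b" unfolding e1 by (intro tendsto_intros Cx)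
    have l3: "(\<lambda>k. inner (C z) (cJ (x k))) \<longlonglongrightarrow> inner (C z) (cJ a)" by (intro tendsto_intros tendsto_cJ xa)
    have l4: "(\<lambda>k. inner (C z) (cJ (x k))) \<longlonglongrightarrow> inner z (cJ b)" unfolding e2 by (intro tendsto_intros tendsto_cJ Cx)
    have "inner (C z) a = inner z b" using LIMSEQ_unique[OF l1 l2] .
    moreover have "inner (C z) (cJ a) = inner z (cJ b)" using LIMSEQ_unique[OF l3 l4] .
    ultimately show ?thesis by (simp add: cinner_eq_iff)
  qed
  then have aD: "a \<in> D" using charD by blast
  have "inner z (C a - b) = 0" if zD: "z \<in> D" for z
  proof -
    have "cinner z (C a) = cinner z b" using eq[OF zD] Csym[OF zD aD] by simp
    then have "inner z (C a) = inner z b" unfolding cinner_eq_iff by blast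
    then show ?thesis by (simp add: inner_diff_right)
  qed
  then have "C a - b = 0" by (rule dense_zero)
  then show ?thesis using aD by simp
qed


definition T :: "real \<Rightarrow> 'a \<Rightarrow> 'a" where "T t x = t *\<^sub>R x + C x"

lemma T_sq: assumes "x \<in> D" "t > 0"
  shows "t\<^sup>2 * (norm x)\<^sup>2 + (norm (C x))\<^sup>2 \<le> (norm (T t x))\<^sup>2"
proof -
  have e: "(norm (T t x))\<^sup>2 = t\<^sup>2 * (norm x)\<^sup>2 + 2 * t * inner x (C x) + (norm (C x))\<^sup>2"
    unfolding T_def by (simp only: power2_norm_eq_inner) (simp add: inner_add_left inner_add_right inner_commute power2_eq_square algebra_simps)
  have "0 \<le> 2 * t * inner x (C x)" using Cpos[OF assms(1)] assms(2) by simp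
  then show ?thesis using e by linarith
qed

lemma T_norm1: assumes "x \<in> D" "t > 0" shows "t * norm x \<le> norm (T t x)"
proof -
  have "(t * norm x)\<^sup>2 = t\<^sup>2 * (norm x)\<^sup>2" by (simp add: power_mult_distrib)
  moreover have "0 \<le> (norm (C x))\<^sup>2" by simp
  ultimately have "(t * norm x)\<^sup>2 \<le> (norm (T t x))\<^sup>2" using T_sq[OF assms] by linarith
  then show ?thesis by (rule power2_le_imp_le) simp
qed

lemma T_norm2: assumes "x \<in> D" "t > 0" shows "norm (C x) \<le> norm (T t x)"
proof -
  have "0 \<le> t\<^sup>2 * (norm x)\<^sup>2" by simp
  then have "(norm (C x))\<^sup>2 \<le> (norm (T t x))\<^sup>2" using T_sq[OF assms] by linarith
  then show ?thesis by (rule power2_le_imp_le) simp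
qed

lemma T_add: "x \<in> D \<Longrightarrow> y \<in> D \<Longrightarrow> T t (x + y) = T t x + T t y"
  unfolding T_def using Cadd by (simp add: scaleR_add_right)
lemma T_diff: "x \<in> D \<Longrightarrow> y \<in> D \<Longrightarrow> T t (x - y) = T t x - T t y"
  unfolding T_def using Cdiff by (simp add: scaleR_diff_right)
lemma T_scale: "x \<in> D \<Longrightarrow> T t (r *\<^sub>R x) = r *\<^sub>R T t x"
  unfolding T_def using CscaleR by (simp add: scaleR_add_right)
lemma T_cJ: "x \<in> D \<Longrightarrow> T t (cJ x) = cJ (T t x)"
  unfolding T_def using CcJ by (simp add: cJ_add cJ_scaleR)

lemma T_closed: assumes t: "t > 0" shows "closed (T t ` D)"
  unfolding closed_sequential_limits
proof (intro allI impI, elim conjE)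
  fix s l assume sV: "\<forall>n. s n \<in> T t ` D" and sl: "s \<longlonglongrightarrow> l"
  then have "\<forall>n. \<exists>x. x \<in> D \<and> s n = T t x" by blast
  then obtain x where xD: "\<And>n. x n \<in> D" and sx: "\<And>n. s n = T t (x n)" by metis
  have cs: "Cauchy s" using sl by (rule LIMSEQ_imp_Cauchy)
  have "Cauchy x"
  proof (rule CauchyI)
    fix e :: real assume e: "e > 0"
    then obtain M where M: "\<forall>m\<ge>M. \<forall>n\<ge>M. norm (s m - s n) < e * t" using CauchyD[OF cs, of "e*t"] t by auto
    show "\<exists>M. \<forall>m\<ge>M. \<forall>n\<ge>M. norm (x m - x n) < e"
    proof (intro exI allI impI)
      fix m n assume "M \<le> m" "M \<le> n"
      then have "norm (s m - s n) < e * t" using M by blast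
      moreover have "t * norm (x m - x n) \<le> norm (s m - s n)"
        using T_norm1[OF Ddiff[OF xD xD] t, of m n] unfolding sx T_diff[OF xD xD] .
      ultimately have "t * norm (x m - x n) < t * e" by (simp add: mult.commute)
      then show "norm (x m - x n) < e" using t by simp
    qed
  qed
  then obtain a where xa: "x \<longlonglongrightarrow> a" using Cauchy_convergent_iff convergent_def by blast
  have "(\<lambda>n. s n - t *\<^sub>R x n) \<longlonglongrightarrow> l - t *\<^sub>R a" by (intro tendsto_intros sl xa)
  moreover have "(\<lambda>n. s n - t *\<^sub>R x n) = (\<lambda>n. C (x n))" by (rule ext) (simp add: sx T_def)
  ultimately have "(\<lambda>n. C (x n)) \<longlonglongrightarrow> l - t *\<^sub>R a" by simp
  from closedC[OF xD xa this] have "a \<in> D" "C a = l - t *\<^sub>R a" by auto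
  then show "l \<in> T t ` D" unfolding T_def by (intro image_eqI[of _ _ a]) auto
qed

lemma T_orth: assumes t: "t > 0" and o: "\<And>z. z \<in> D \<Longrightarrow> inner (T t z) w = 0" shows "w = 0"
proof -
  have "cinner (C z) w = cinner z (- t *\<^sub>R w)" if zD: "z \<in> D" for z
  proof -
    have o1: "t * inner z w + inner (C z) w = 0" using o[OF zD] unfolding T_def by (simp add: inner_add_left)
    have o2: "t * inner (cJ z) w + inner (C (cJ z)) w = 0" using o[OF DcJ[OF zD]] unfolding T_def by (simp add: inner_add_left)
    have a1: "inner (C z) (cJ w) = - inner (cJ (C z)) w" using inner_cJ_left[of "C z" w] by simp
    have a2: "inner (cJ z) w = - inner z (cJ w)" by (rule inner_cJ_left)
    have "inner (C z) (cJ w) = - inner (cJ (C z)) w" by (rule a1)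
    also have "\<dots> = - inner (C (cJ z)) w" by (simp only: CcJ[OF zD])
    also have "\<dots> = t * inner (cJ z) w" using o2 by linarith
    also have "\<dots> = - t * inner z (cJ w)" by (simp only: a2)
    also have "\<dots> = inner z (cJ (- t *\<^sub>R w))" by (simp only: cJ_scaleR[of "- t" w]) simp
    finally have "inner (C z) (cJ w) = inner z (cJ (- t *\<^sub>R w))" .
    moreover have "inner (C z) w = inner z (- t *\<^sub>R w)" using o1 by simp
    ultimately show ?thesis by (simp add: cinner_eq_iff)
  qed
  then have wD: "w \<in> D" using charD by blast
  have "t * inner w w + inner (C w) w = 0" using o[OF wD] unfolding T_def by (simp add: inner_add_left)
  moreover have "0 \<le> inner (C w) w" using Cpos[OF wD] by (simp add: inner_commute)
  ultimately have "t * inner w w \<le> 0" by linarith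
  then have "inner w w \<le> 0" using t by (simp add: mult_le_0_iff)
  then have "inner w w = 0" using inner_ge_zero[of w] by linarith
  then show ?thesis by simp
qed

lemma T_surj: assumes t: "t > 0" shows "\<exists>x\<in>D. T t x = y"
proof -
  have "\<exists>p\<in>T t ` D. \<forall>v\<in>T t ` D. inner (y - p) v = 0"
  proof (rule projection_exists[OF T_closed[OF t]])
    show "0 \<in> T t ` D" using D0 T_scale[OF D0, of t 0] by (intro image_eqI[of _ _ 0]) auto
    show "a + b \<in> T t ` D" if ab: "a \<in> T t ` D" "b \<in> T t ` D" for a b
    proof -
      obtain x y where "x \<in> D" "y \<in> D" "a = T t x" "b = T t y" using ab by blast
      then show ?thesis using T_add[of x y t] Dadd[of x y] by (intro image_eqI[of _ _ "x + y"]) auto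
    qed
    show "r *\<^sub>R a \<in> T t ` D" if ab: "a \<in> T t ` D" for r a
    proof -
      obtain x where "x \<in> D" "a = T t x" using ab by blast
      then show ?thesis using T_scale[of x t r] DscaleR[of x r] by (intro image_eqI[of _ _ "r *\<^sub>R x"]) auto
    qed
  qed
  then obtain p where pV: "p \<in> T t ` D" and o: "\<forall>v\<in>T t ` D. inner (y - p) v = 0" by blast
  have "y - p = 0" by (rule T_orth[OF t]) (use o in \<open>auto simp: inner_commute\<close>)
  then show ?thesis using pV by auto
qed

definition S :: "real \<Rightarrow> 'a \<Rightarrow> 'a" where "S t y = (SOME x. x \<in> D \<and> T t x = y)"

lemma S_prop: assumes "t > 0" shows "S t y \<in> D" "T t (S t y) = y"
proof -
  have "\<exists>x. x \<in> D \<and> T t x = y" using T_surj[OF assms] by blast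
  then have "S t y \<in> D \<and> T t (S t y) = y" unfolding S_def by (rule someI_ex)
  then show "S t y \<in> D" "T t (S t y) = y" by auto
qed

lemma T_inj: assumes t: "t > 0" and "x \<in> D" "x' \<in> D" "T t x = T t x'" shows "x = x'"
proof -
  have "t * norm (x - x') \<le> norm (T t (x - x'))" using T_norm1[OF Ddiff[OF assms(2,3)] t] .
  also have "\<dots> = 0" using T_diff[OF assms(2,3)] assms(4) by simp
  finally show ?thesis using t by (simp add: mult_le_0_iff)
qed

lemma S_T: assumes t: "t > 0" and "x \<in> D" shows "S t (T t x) = x"
  using T_inj[OF t S_prop(1)[OF t] assms(2)] S_prop(2)[OF t] by simp

lemma S_add: assumes t: "t > 0" shows "S t (a + b) = S t a + S t b"
proof -
  have "T t (S t a + S t b) = a + b" using T_add[OF S_prop(1)[OF t] S_prop(1)[OF t]] S_prop(2)[OF t] by simp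
  then show ?thesis using S_T[OF t Dadd[OF S_prop(1)[OF t, of a] S_prop(1)[OF t, of b]]] by simp
qed

lemma S_scale: assumes t: "t > 0" shows "S t (r *\<^sub>R a) = r *\<^sub>R S t a"
proof -
  have "T t (r *\<^sub>R S t a) = r *\<^sub>R a" using T_scale[OF S_prop(1)[OF t]] S_prop(2)[OF t] by simp
  then show ?thesis using S_T[OF t DscaleR[OF S_prop(1)[OF t, of a], of r]] by simp
qed

lemma S_diff: assumes t: "t > 0" shows "S t (a - b) = S t a - S t b"
  using S_add[OF t, of a "-b"] S_scale[OF t, of "-1" b] by simp

lemma S_norm1: assumes t: "t > 0" shows "t * norm (S t y) \<le> norm y"
  using T_norm1[OF S_prop(1)[OF t] t] S_prop(2)[OF t] by simp

lemma CS: assumes t: "t > 0" shows "C (S t y) = y - t *\<^sub>R S t y"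
  using S_prop(2)[OF t, of y] unfolding T_def by (simp add: algebra_simps)

definition R :: "real \<Rightarrow> 'a \<Rightarrow> 'a" where "R t y = t *\<^sub>R S t y"

lemma R_in: "t > 0 \<Longrightarrow> R t y \<in> D" unfolding R_def by (intro DscaleR S_prop)
lemma R_norm: assumes t: "t > 0" shows "norm (R t y) \<le> norm y"
  unfolding R_def using S_norm1[OF t] t by simp
lemma R_diff: assumes t: "t > 0" shows "R t (a - b) = R t a - R t b"
  unfolding R_def S_diff[OF t] by (simp add: scaleR_diff_right)
lemma CR: assumes t: "t > 0" shows "C (R t y) = t *\<^sub>R y - t *\<^sub>R R t y"
  unfolding R_def using CscaleR[OF S_prop(1)[OF t]] CS[OF t] by (simp add: scaleR_diff_right)
lemma R_D: assumes t: "t > 0" and xD: "x \<in> D" shows "R t x - x = - S t (C x)"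
proof -
  have "S t (t *\<^sub>R x + C x) = x" using S_T[OF t xD] unfolding T_def .
  then have "t *\<^sub>R S t x + S t (C x) = x" using S_add[OF t] S_scale[OF t] by simp
  then show ?thesis unfolding R_def by (simp add: algebra_simps)
qed
lemma CR_D: assumes t: "t > 0" and xD: "x \<in> D" shows "C (R t x) = R t (C x)"
proof -
  have "C (R t x) = - t *\<^sub>R (R t x - x)" using CR[OF t] by (simp add: algebra_simps)
  also have "\<dots> = R t (C x)" unfolding R_D[OF t xD] by (simp add: R_def)
  finally show ?thesis .
qed

lemma R_conv: "(\<lambda>n. R (real (Suc n)) y) \<longlonglongrightarrow> y"
  unfolding LIMSEQ_iff
proof (intro allI impI)
  fix e :: real assume e: "e > 0"
  have "y \<in> closure D" unfolding dense by (rule UNIV_I)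
  moreover have "e / 3 > 0" using e by simp
  ultimately obtain z where zD: "z \<in> D" and zy: "dist z y < e / 3" unfolding closure_approachable by blast
  obtain N :: nat where N: "norm (C z) / (e / 3) < real N" using reals_Archimedean2 by blast
  show "\<exists>no. \<forall>n\<ge>no. norm (R (real (Suc n)) y - y) < e"
  proof (intro exI allI impI)
    fix n assume nN: "N \<le> n"
    define t where "t = real (Suc n)"
    have t: "t > 0" unfolding t_def by simp
    have "norm (R t z - z) = norm (S t (C z))" using R_D[OF t zD] by simp
    also have "\<dots> \<le> norm (C z) / t" using S_norm1[OF t, of "C z"] t by (simp add: field_simps)
    also have "\<dots> < e / 3"
    proof -
      have "norm (C z) < (e/3) * real N" using N e by (simp add: field_simps)
      also have "\<dots> \<le> (e/3) * t" using nN e unfolding t_def by (intro mult_left_mono) auto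
      finally show ?thesis using t by (simp add: field_simps)
    qed
    finally have h1: "norm (R t z - z) < e / 3" .
    have h2: "norm (R t (y - z)) \<le> norm (y - z)" by (rule R_norm[OF t])
    have h3: "norm (y - z) < e / 3" using zy by (simp add: dist_norm norm_minus_commute)
    have "R t y - y = R t (y - z) + (R t z - z) + (z - y)" using R_diff[OF t, of y z] by simp
    moreover have "norm (R t (y - z) + (R t z - z) + (z - y)) \<le> norm (R t (y - z) + (R t z - z)) + norm (z - y)"
      by (rule norm_triangle_ineq)
    moreover have "norm (R t (y - z) + (R t z - z)) \<le> norm (R t (y - z)) + norm (R t z - z)"
      by (rule norm_triangle_ineq)
    ultimately have "norm (R t y - y) \<le> norm (R t (y - z)) + norm (R t z - z) + norm (z - y)"
      by simp
    moreover have "norm (z - y) = norm (y - z)" by (rule norm_minus_commute)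
    ultimately have "norm (R t y - y) < e" using h1 h2 h3 by linarith
    then show "norm (R (real (Suc n)) y - y) < e" unfolding t_def .
  qed
qed

end

locale sopL = sop +
  fixes L :: "'a \<Rightarrow> 'a"
  assumes bL: "bounded_op_from_graph D C L"
begin

lemma Ladd: "x \<in> D \<Longrightarrow> y \<in> D \<Longrightarrow> L (x + y) = L x + L y"
  using bL unfolding bounded_op_from_graph_def by blast

lemma Ldiff: assumes "x \<in> D" "y \<in> D" shows "L (x - y) = L x - L y"
proof -
  have "L (y + (x - y)) = L y + L (x - y)" by (rule Ladd[OF assms(2) Ddiff[OF assms]])
  then show ?thesis by simp
qed

lemma Lbound: obtains K where "\<And>x. x \<in> D \<Longrightarrow> norm (L x) \<le> K * (norm x + norm (C x))" "K \<ge> 0"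
proof -
  obtain K where K: "\<And>x. x \<in> D \<Longrightarrow> norm (L x) \<le> K * graph_norm C x"
    using bL unfolding bounded_op_from_graph_def by blast
  have "norm (L x) \<le> \<bar>K\<bar> * (norm x + norm (C x))" if xD: "x \<in> D" for x
  proof -
    have g0: "graph_norm C x \<ge> 0" unfolding graph_norm_def by simp
    have "graph_norm C x \<le> norm x + norm (C x)" unfolding graph_norm_def
      by (rule sqrt_sum_squares_le_sum) auto
    then have "\<bar>K\<bar> * graph_norm C x \<le> \<bar>K\<bar> * (norm x + norm (C x))" by (intro mult_left_mono) auto
    moreover have "K * graph_norm C x \<le> \<bar>K\<bar> * graph_norm C x" using g0 by (intro mult_right_mono) auto
    ultimately show ?thesis using K[OF xD] by linarith
  qed
  then show ?thesis using that[of "\<bar>K\<bar>"] by simp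
qed


lemma Rlip: assumes t: "t > 0" shows "norm (R t a - R t b) \<le> norm (a - b)"
  using R_norm[OF t, of "a - b"] R_diff[OF t] by simp

lemma CRb: assumes t: "t > 0" shows "norm (C (R t w)) \<le> 2 * t * norm w"
proof -
  have "norm (C (R t w)) = norm (t *\<^sub>R w - t *\<^sub>R R t w)" using CR[OF t] by simp
  also have "\<dots> \<le> norm (t *\<^sub>R w) + norm (t *\<^sub>R R t w)" by (rule norm_triangle_ineq4)
  also have "\<dots> = t * norm w + t * norm (R t w)" using t by simp
  also have "\<dots> \<le> t * norm w + t * norm w" using R_norm[OF t, of w] t by (simp add: mult_left_mono)
  finally show ?thesis by simp
qed

lemma meas: "(\<lambda>x. L (pi_C D x)) \<in> borel_measurable borel"
proof -
  obtain K where Kb: "\<And>x. x \<in> D \<Longrightarrow> norm (L x) \<le> K * (norm x + norm (C x))" and K0: "K \<ge> 0"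
    using Lbound by blast
  define r where "r n = real (Suc n)" for n
  have rp: "r n > 0" for n unfolding r_def by simp
  define g where "g n x = L (R (r n) x)" for n x
  define c where "c n x = C (R (r n) x)" for n x
  have gc: "continuous_on UNIV (g n)" for n
  proof (rule lipschitz_cont[where M = "K * (1 + 2 * r n)"])
    fix a b
    have "g n a - g n b = L (R (r n) (a - b))"
      unfolding g_def R_diff[OF rp] by (rule Ldiff[OF R_in[OF rp] R_in[OF rp], symmetric])
    then have "norm (g n a - g n b) \<le> K * (norm (R (r n) (a - b)) + norm (C (R (r n) (a - b))))"
      using Kb[OF R_in[OF rp]] by simp
    also have "\<dots> \<le> K * (norm (a - b) + 2 * r n * norm (a - b))"
      using R_norm[OF rp, of n "a - b"] CRb[OF rp, of n "a - b"] K0 by (intro mult_left_mono) auto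
    also have "\<dots> = K * (1 + 2 * r n) * norm (a - b)" by (simp add: algebra_simps)
    finally show "norm (g n a - g n b) \<le> K * (1 + 2 * r n) * norm (a - b)" .
  qed
  have cc: "continuous_on UNIV (c n)" for n
  proof (rule lipschitz_cont[where M = "2 * r n"])
    fix a b
    have "c n a - c n b = C (R (r n) (a - b))"
      unfolding c_def R_diff[OF rp] by (rule Cdiff[OF R_in[OF rp] R_in[OF rp], symmetric])
    then show "norm (c n a - c n b) \<le> 2 * r n * norm (a - b)" using CRb[OF rp] by simp
  qed
  have Rc: "(\<lambda>n. R (r n) y) \<longlonglongrightarrow> y" for y unfolding r_def by (rule R_conv)
  have gconv: "(\<lambda>n. g n x) \<longlonglongrightarrow> L x" if xD: "x \<in> D" for x
  proof -
    have "(\<lambda>n. g n x - L x) \<longlonglongrightarrow> 0"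
    proof (rule Lim_null_comparison)
      show "\<forall>\<^sub>F n in sequentially. norm (g n x - L x) \<le> K * (norm (R (r n) x - x) + norm (R (r n) (C x) - C x))"
      proof (intro always_eventually allI)
        fix n
        have "g n x - L x = L (R (r n) x - x)" unfolding g_def by (rule Ldiff[OF R_in[OF rp] xD, symmetric])
        moreover have "C (R (r n) x - x) = R (r n) (C x) - C x" using Cdiff[OF R_in[OF rp] xD] CR_D[OF rp xD] by simp
        ultimately show "norm (g n x - L x) \<le> K * (norm (R (r n) x - x) + norm (R (r n) (C x) - C x))"
          using Kb[OF Ddiff[OF R_in[OF rp[of n], of x] xD]] by simp
      qed
      have "(\<lambda>n. K * (norm (R (r n) x - x) + norm (R (r n) (C x) - C x))) \<longlonglongrightarrow> K * (norm (x - x) + norm (C x - C x))"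
        by (intro tendsto_intros Rc)
      then show "(\<lambda>n. K * (norm (R (r n) x - x) + norm (R (r n) (C x) - C x))) \<longlonglongrightarrow> 0" by simp
    qed
    then show ?thesis by (rule LIM_zero_cancel)
  qed
  have Deq: "D = {x. Cauchy (\<lambda>n. c n x)}"
  proof (intro set_eqI iffI)
    fix x assume xD: "x \<in> D"
    have "(\<lambda>n. c n x) = (\<lambda>n. R (r n) (C x))" unfolding c_def using CR_D[OF rp xD] by simp
    then have "(\<lambda>n. c n x) \<longlonglongrightarrow> C x" using Rc by simp
    then show "x \<in> {x. Cauchy (\<lambda>n. c n x)}" by (simp add: LIMSEQ_imp_Cauchy)
  next
    fix x assume "x \<in> {x. Cauchy (\<lambda>n. c n x)}"
    then have "Cauchy (\<lambda>n. c n x)" by simp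
    then obtain b where "(\<lambda>n. c n x) \<longlonglongrightarrow> b" using Cauchy_convergent_iff convergent_def by blast
    then have "(\<lambda>n. C (R (r n) x)) \<longlonglongrightarrow> b" unfolding c_def .
    from closedC[OF R_in[OF rp] Rc this] show "x \<in> D" by simp
  qed
  have dm[measurable]: "(\<lambda>x. dist (c m x) (c n x)) \<in> borel_measurable borel" for m n
    by (intro borel_measurable_continuous_onI continuous_on_dist cc)
  have "{x \<in> space borel. \<forall>j. \<exists>M. \<forall>m\<ge>M. \<forall>n\<ge>M. dist (c m x) (c n x) < inverse (real (Suc j))} \<in> sets borel"
    by measurable
  moreover have "{x \<in> space borel. \<forall>j. \<exists>M. \<forall>m\<ge>M. \<forall>n\<ge>M. dist (c m x) (c n x) < inverse (real (Suc j))} = D"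
    unfolding Deq by (simp add: metric_Cauchy_iff2)
  ultimately have Ds: "D \<in> sets borel" by (rule back_subst[where P = "\<lambda>S. S \<in> sets borel"])
  have "L \<in> borel_measurable (restrict_space borel D)"
  proof (rule borel_measurable_LIMSEQ_metric[where f = g])
    show "g i \<in> borel_measurable (restrict_space borel D)" for i
      by (intro measurable_restrict_space1 borel_measurable_continuous_onI gc)
    show "(\<lambda>i. g i x) \<longlonglongrightarrow> L x" if "x \<in> space (restrict_space borel D)" for x
      using that gconv by (simp add: space_restrict_space)
  qed
  then have "(\<lambda>x. if x \<in> D then L x else L 0) \<in> borel_measurable borel"
    using measurable_restrict_space_iff[of D borel "L 0" borel L] Ds by simp
  moreover have "(\<lambda>x. L (pi_C D x)) = (\<lambda>x. if x \<in> D then L x else L 0)"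
    by (rule ext) (simp add: pi_C_def)
  ultimately show ?thesis by simp
qed

end
theorem lemma5p2:
  fixes D :: "'a::complex_hilbert set" and C L :: "'a \<Rightarrow> 'a"
  assumes "separable_space (euclidean :: 'a topology)"
    and "self_adjoint_op D C"
    and "positive_op D C"
    and "bounded_op_from_graph D C L"
  shows "(\<lambda>x. L (pi_C D x)) \<in> measurable borel borel"
proof -
  interpret sopL D C L
    using assms(2,3,4) by (simp add: sopL_def sop_def sopL_axioms_def)
  show ?thesis by (rule meas)
qed

end
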